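(* Let $N,K,d$ be positive integers, let $\bm{r},\bm{q}\in\mathbb{R}^d$, let $\mathcal{H}$ be a finite nonempty scenario set, and for each $k\in\{1,\dots,K\}$ and $h\in\mathcal{H}$ let $\bm{M^{k,h}}\in\mathbb{R}^{d\times d}$. Let $$\mathcal{X}=\Big\{\bm{x}\in\{0,1\}^{N\times K}:\ \textstyle\sum_{k=1}^K x_{n,k}=1,\ n=1,\dots,N\Big\},$$ and for $h\in\mathcal{H}$ and $\bm{x}\in\mathcal{X}$ let $f_h(\bm{x})=\bm{r}^\top\Big[\prod_{n=1}^N\Big(\sum_{k=1}^K \bm{M^{k,h}}x_{n,k}\Big)\Big]\bm{q}$. Let $\alpha\in(0,1]$, and let $\mathcal{H}^1,\dots,\mathcal{H}^P$ be a partition of $\mathcal{H}$ into $P$ subsets of equal cardinality with $\alpha|\mathcal{H}^p|\in\mathbb{Z}_+$ for all $p$ (so also $\alpha|\mathcal{H}|\in\mathbb{Z}_+$). Let $\hat z_{\mathcal{H}}=\max_{\bm{x}\in\mathcal{X}} s_\alpha\big([f_h(\bm{x})]_{h\in\mathcal{H}}\big)$, and for each $p$ let $\bm{x^{(p)}}\in\arg\max_{\bm{x}\in\mathcal{X}} s_\alpha\big([f_h(\bm{x})]_{h\in\mathcal{H}^p}\big)$. Then $$\max_{p=1,\dots,P} s_\alpha\big([f_h(\bm{x^{(p)}})]_{h\in\mathcal{H}}\big)\ \le\ \hat z_{\mathcal{H}}\ \le\ \frac1P\sum_{p=1}^P s_\alpha\big([f_h(\bm{x^{(p)}})]_{h\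in\mathcal{H}^p}\big).$$
   Context: For a finite index set $\mathcal{G}$, a vector $\bm{\upsilon}\in\mathbb{R}^{|\mathcal{G}|}$ and $\alpha\in(0,1]$ with $\alpha|\mathcal{G}|\in\mathbb{Z}_+$, $s_\alpha(\bm{\upsilon})$ denotes the average of the $\alpha|\mathcal{G}|$ smallest entries of $\bm{\upsilon}$ (a conditional-value-at-risk type quantity). In the paper $\hat z_{\mathcal{H}}$ is defined as the optimal value of a mixed-integer linear program that is an exact reformulation of the maximization problem written above. *)

theory Defs
  imports "HOL-Analysis.Analysis" "HOL-Library.Multiset"
begin

definition assignments :: "nat \<Rightarrow> nat \<Rightarrow> (nat \<Rightarrow> nat \<Rightarrow> real) set" where
  "assignments N K = {x. (\<forall>n<N. \<forall>k<K. x n k \<in> {0,1})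
                        \<and> (\<forall>n<N. (\<Sum>k<K. x n k) = 1)
                        \<and> (\<forall>n k. (n \<ge> N \<or> k \<ge> K) \<longrightarrow> x n k = 0)}"

definition mat_prod_list :: "nat \<Rightarrow> (nat \<Rightarrow> real^'d^'d) \<Rightarrow> real^'d^'d" where
  "mat_prod_list N A = foldl (\<lambda>P n. P ** A n) (mat 1) [0..<N]"

definition f_val :: "nat \<Rightarrow> nat \<Rightarrow> (nat \<Rightarrow> 'h \<Rightarrow> real^'d^'d) \<Rightarrow> real^'d \<Rightarrow> real^'d
                     \<Rightarrow> 'h \<Rightarrow> (nat \<Rightarrow> nat \<Rightarrow> real) \<Rightarrow> real" where
  "f_val N K M r q h x = r \<bullet> (mat_prod_list N (\<lambda>n. \<Sum>k<K. x n k *\<^sub>R M k h) *v q)"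

definition s_alpha :: "real \<Rightarrow> 'h set \<Rightarrow> ('h \<Rightarrow> real) \<Rightarrow> real" where
  "s_alpha \<alpha> G v = (let m = nat \<lfloor>\<alpha> * real (card G)\<rfloor> in
     sum_list (take m (sorted_list_of_multiset (image_mset v (mset_set G)))) / real m)"

end

theory Submission imports Defs begin

definition ssum :: "'h set \<Rightarrow> ('h \<Rightarrow> real) \<Rightarrow> nat \<Rightarrow> real" where
  "ssum G v m = sum_list (take m (sorted_list_of_multiset (image_mset v (mset_set G))))"

lemma sorted_enum:
  assumes "finite G"
  shows "\<exists>xs. distinct xs \<and> set xs = G \<and> sorted (map v xs) \<and>
     sorted_list_of_multiset (image_mset v (mset_set G)) = map v xs"
proof -
  obtain ys where ys: "distinct ys" "set ys = G" using finite_distinct_list[OF assms] by blast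
  define xs where "xs = sort_key v ys"
  have m: "mset xs = mset ys" unfolding xs_def by simp
  have d: "distinct xs" unfolding xs_def using ys by simp
  have s: "set xs = G" using m ys by (metis mset_eq_setD)
  have so: "sorted (map v xs)" unfolding xs_def by (simp add: sorted_sort_key)
  have "image_mset v (mset_set G) = mset (map v xs)"
    using ys m by (metis mset_set_set mset_map)
  then have "sorted_list_of_multiset (image_mset v (mset_set G)) = map v xs"
    using so by (metis sorted_list_of_multiset_mset sorted_sort_id)
  then show ?thesis using d s so by blast
qed

lemma ssum_sum_take:
  assumes "distinct xs" "sorted_list_of_multiset (image_mset v (mset_set G)) = map v xs"
  shows "ssum G v m = sum v (set (take m xs))"
proof -
  have "ssum G v m = sum_list (map v (take m xs))" unfolding ssum_def assms(2) by (simp add: take_map)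
  also have "\<dots> = sum v (set (take m xs))" using assms(1) by (simp add: sum_list_distinct_conv_sum_set)
  finally show ?thesis .
qed

lemma ssum_attained:
  assumes "finite G" "m \<le> card G"
  shows "\<exists>S\<subseteq>G. card S = m \<and> sum v S = ssum G v m"
proof -
  obtain xs where xs: "distinct xs" "set xs = G" "sorted (map v xs)"
    "sorted_list_of_multiset (image_mset v (mset_set G)) = map v xs"
    using sorted_enum[OF assms(1)] by blast
  have l: "length xs = card G" using xs by (metis distinct_card)
  have "card (set (take m xs)) = m" using xs(1) l assms(2) by (simp add: distinct_card)
  moreover have "set (take m xs) \<subseteq> G" using xs(2) by (meson set_take_subset)
  ultimately show ?thesis using ssum_sum_take[OF xs(1) xs(4)] by metis
qed

lemma ssum_le:
  assumes "finite G" "S \<subseteq> G" "card S = m"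
  shows "ssum G v m \<le> sum v S"
proof -
  obtain xs where xs: "distinct xs" "set xs = G" "sorted (map v xs)"
    "sorted_list_of_multiset (image_mset v (mset_set G)) = map v xs"
    using sorted_enum[OF assms(1)] by blast
  have l: "length xs = card G" using xs by (metis distinct_card)
  have mle: "m \<le> length xs" using l assms card_mono by metis
  define T where "T = set (take m xs)"
  have e: "ssum G v m = sum v T" unfolding T_def using ssum_sum_take[OF xs(1) xs(4)] .
  show ?thesis
  proof (cases "m = 0")
    case True
    then have "S = {}" using assms finite_subset card_0_eq by metis
    then show ?thesis using e True by (simp add: T_def)
  next
    case False
    define t where "t = v (xs ! (m - 1))"
    have fin: "finite S" "finite T" using assms finite_subset T_def by auto
    have cT: "card T = m" unfolding T_def using xs(1) mle by (simp add: distinct_card)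
    have lo: "v y \<le> t" if yT: "y \<in> T" for y
    proof -
      obtain i where i: "i < m" "y = xs ! i" using yT mle unfolding T_def
        by (auto simp: in_set_conv_nth)
      have "(map v xs) ! i \<le> (map v xs) ! (m - 1)"
        using xs(3) i mle False by (intro sorted_nth_mono) auto
      then show ?thesis using i mle unfolding t_def by simp
    qed
    have hi: "t \<le> v y" if yST: "y \<in> S - T" for y
    proof -
      have "y \<in> set xs" using yST assms(2) xs(2) by auto
      then obtain j where j: "j < length xs" "y = xs ! j" by (auto simp: in_set_conv_nth)
      have "\<not> j < m" using yST j unfolding T_def
        by (metis DiffD2 in_set_conv_nth length_take min.absorb4 min_less_iff_conj nth_take)
      then have "(map v xs) ! (m - 1) \<le> (map v xs) ! j"
        using xs(3) j mle False by (intro sorted_nth_mono) auto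
      then show ?thesis using j mle False unfolding t_def by simp
    qed
    have cc: "card (S - T) = card (T - S)"
      using fin cT assms(3) by (simp add: card_Diff_subset_Int Int_commute)
    have "sum v (T - S) \<le> of_nat (card (T - S)) * t"
      using sum_bounded_above[of "T - S" v t] lo by auto
    also have "\<dots> \<le> sum v (S - T)"
      using sum_bounded_below[of "S - T" t v] hi cc by auto
    finally have "sum v (T - S) \<le> sum v (S - T)" .
    moreover have "sum v T = sum v (T - S) + sum v (T \<inter> S)"
      using fin by (metis sum.Int_Diff add.commute)
    moreover have "sum v S = sum v (S - T) + sum v (T \<inter> S)"
      using fin by (metis sum.Int_Diff add.commute inf_commute)
    ultimately show ?thesis using e by linarith
  qed
qed
theorem proposition2:
  fixes N K P :: nat
    and r q :: "real^'d"
    and H :: "'h set"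
    and M :: "nat \<Rightarrow> 'h \<Rightarrow> real^'d^'d"
    and \<alpha> :: real
    and Hp :: "nat \<Rightarrow> 'h set"
    and xp :: "nat \<Rightarrow> (nat \<Rightarrow> nat \<Rightarrow> real)"
  assumes "N > 0" and "K > 0"
    and "finite H" and "H \<noteq> {}"
    and "0 < \<alpha>" and "\<alpha> \<le> 1"
    and "P > 0"
    and "(\<Union>p<P. Hp p) = H"
    and "\<forall>p<P. \<forall>p'<P. p \<noteq> p' \<longrightarrow> Hp p \<inter> Hp p' = {}"
    and "\<forall>p<P. \<forall>p'<P. card (Hp p) = card (Hp p')"
    and "\<forall>p<P. \<alpha> * real (card (Hp p)) \<in> \<int>"
    and "\<forall>p<P. xp p \<in> assignments N K \<and>
           (\<forall>x\<in>assignments N K.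
              s_alpha \<alpha> (Hp p) (\<lambda>h. f_val N K M r q h x)
              \<le> s_alpha \<alpha> (Hp p) (\<lambda>h. f_val N K M r q h (xp p)))"
  shows "(MAX p\<in>{..<P}. s_alpha \<alpha> H (\<lambda>h. f_val N K M r q h (xp p)))
           \<le> (MAX x\<in>assignments N K. s_alpha \<alpha> H (\<lambda>h. f_val N K M r q h x))
       \<and> (MAX x\<in>assignments N K. s_alpha \<alpha> H (\<lambda>h. f_val N K M r q h x))
           \<le> (1 / real P) * (\<Sum>p<P. s_alpha \<alpha> (Hp p) (\<lambda>h. f_val N K M r q h (xp p)))"
proof -
  note a = assms
  define A where "A = assignments N K"
  define F where "F x = s_alpha \<alpha> H (\<lambda>h. f_val N K M r q h x)" for x
  define D where "D = {..<N} \<times> {..<K}"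
  define E where "E g = (\<lambda>n k. if (n, k) \<in> D then g (n, k) else (0::real))" for g :: "nat \<times> nat \<Rightarrow> real"
  have "A \<subseteq> E ` (PiE D (\<lambda>_. {0, 1}))"
  proof
    fix x assume xA: "x \<in> A"
    let ?g = "restrict (\<lambda>(n, k). x n k) D"
    have "?g \<in> PiE D (\<lambda>_. {0, 1})" using xA unfolding A_def assignments_def D_def by auto
    moreover have "E ?g = x" using xA unfolding A_def assignments_def D_def E_def
      by (intro ext) auto
    ultimately show "x \<in> E ` (PiE D (\<lambda>_. {0, 1}))" by (metis image_eqI)
  qed
  then have finA: "finite A" by (rule finite_subset) (auto simp: D_def intro!: finite_PiE)
  define x0 where "x0 = (\<lambda>n (k::nat). if n < N \<and> k = 0 then 1 else (0::real))"
  have "x0 \<in> A" unfolding A_def assignments_def x0_def using a(2)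
    by (auto simp: sum.delta)
  then have neA: "A \<noteq> {}" by auto
  have part1: "(MAX p\<in>{..<P}. F (xp p)) \<le> (MAX x\<in>A. F x)"
  proof -
    have "\<forall>p\<in>{..<P}. F (xp p) \<le> (MAX x\<in>A. F x)"
      using a(12) finA by (auto simp: A_def intro!: Max_ge)
    then show ?thesis using a(7) by (subst Max_le_iff) auto
  qed
  obtain xs where xs: "xs \<in> A" "F xs = (MAX x\<in>A. F x)"
  proof -
    have "Max (F ` A) \<in> F ` A" using finA neA by (intro Max_in) auto
    then show ?thesis using that by auto
  qed
  define v where "v h = f_val N K M r q h xs" for h
  define c where "c = card (Hp 0)"
  have HpH: "Hp p \<subseteq> H" if "p < P" for p using a(8) that by blast
  have finHp: "finite (Hp p)" if "p < P" for p by (rule finite_subset[OF HpH[OF that] a(3)])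
  have cardp: "card (Hp p) = c" if "p < P" for p using a(10) a(7) that unfolding c_def by blast
  have cardH: "card H = P * c"
  proof -
    have "card H = (\<Sum>p<P. card (Hp p))" unfolding a(8)[symmetric]
      using finHp a(9) by (intro card_UN_disjoint) auto
    then show ?thesis using cardp by simp
  qed
  have "card H > 0" using a(3) a(4) by (simp add: card_gt_0_iff)
  then have cpos: "c > 0" using cardH by simp
  have "\<alpha> * real (card (Hp 0)) \<in> \<int>" using a(11) a(7) by auto
  then obtain z where z: "\<alpha> * real c = of_int z" unfolding c_def by (auto elim: Ints_cases)
  have "0 < \<alpha> * real c" using a(5) cpos by simp
  then have zpos: "z > 0" using z by simp
  define mp where "mp = nat z"
  have mppos: "mp > 0" using zpos mp_def by simp
  have mpreal: "real mp = \<alpha> * real c" using z zpos mp_def by simp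
  have mple: "mp \<le> c"
  proof -
    have "\<alpha> * real c \<le> real c" using a(5) a(6) by (intro mult_left_le_one_le) auto
    then show ?thesis using mpreal by linarith
  qed
  have flp: "nat \<lfloor>\<alpha> * real (card (Hp p))\<rfloor> = mp" if "p < P" for p
    using cardp[OF that] z mp_def by simp
  have flH: "nat \<lfloor>\<alpha> * real (card H)\<rfloor> = P * mp"
  proof -
    have "\<alpha> * real (card H) = of_int (int P * z)" using cardH z by (simp add: algebra_simps)
    then have "nat \<lfloor>\<alpha> * real (card H)\<rfloor> = nat (int P * z)" by (simp only: floor_of_int)
    also have "\<dots> = P * nat z" using zpos by (simp add: nat_mult_distrib)
    finally show ?thesis unfolding mp_def .
  qed
  have sH: "F xs = ssum H v (P * mp) / real (P * mp)"
    unfolding F_def s_alpha_def Let_def flH ssum_def v_def ..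
  have sp: "s_alpha \<alpha> (Hp p) u = ssum (Hp p) u mp / real mp" if "p < P" for p u
    unfolding s_alpha_def Let_def flp[OF that] ssum_def ..
  have exS: "\<exists>S. S \<subseteq> Hp p \<and> card S = mp \<and> sum v S = ssum (Hp p) v mp" if "p < P" for p
    using ssum_attained[OF finHp[OF that], of mp v] cardp[OF that] mple by auto
  define S where "S p = (SOME S. S \<subseteq> Hp p \<and> card S = mp \<and> sum v S = ssum (Hp p) v mp)" for p
  have S: "S p \<subseteq> Hp p \<and> card (S p) = mp \<and> sum v (S p) = ssum (Hp p) v mp" if "p < P" for p
    unfolding S_def using someI_ex[OF exS[OF that]] .
  define U where "U = (\<Union>p<P. S p)"
  have finS: "finite (S p)" if "p < P" for p using S[OF that] finHp[OF that] finite_subset by auto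
  have disjS: "\<forall>p\<in>{..<P}. \<forall>p'\<in>{..<P}. p \<noteq> p' \<longrightarrow> S p \<inter> S p' = {}"
  proof (intro ballI impI)
    fix p p' assume pp: "p \<in> {..<P}" "p' \<in> {..<P}" "p \<noteq> p'"
    have "S p \<subseteq> Hp p" "S p' \<subseteq> Hp p'" using S pp by auto
    moreover have "Hp p \<inter> Hp p' = {}" using a(9) pp by auto
    ultimately show "S p \<inter> S p' = {}" by blast
  qed
  have UH: "U \<subseteq> H" unfolding U_def using S HpH by blast
  have cU: "card U = P * mp" unfolding U_def
    by (subst card_UN_disjoint) (use finS disjS S in auto)
  have sU: "sum v U = (\<Sum>p<P. ssum (Hp p) v mp)" unfolding U_def
    by (subst sum.UNION_disjoint) (use finS disjS S in auto)
  have le1: "ssum H v (P * mp) \<le> (\<Sum>p<P. ssum (Hp p) v mp)"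
    using ssum_le[OF a(3) UH cU, of v] sU by simp
  have "F xs \<le> (\<Sum>p<P. ssum (Hp p) v mp) / real (P * mp)"
    unfolding sH using le1 a(7) mppos by (intro divide_right_mono) auto
  also have "\<dots> = (1 / real P) * (\<Sum>p<P. ssum (Hp p) v mp / real mp)"
    by (simp add: sum_divide_distrib sum_distrib_left mult.commute)
  also have "\<dots> = (1 / real P) * (\<Sum>p<P. s_alpha \<alpha> (Hp p) v)"
    using sp by simp
  also have "\<dots> \<le> (1 / real P) * (\<Sum>p<P. s_alpha \<alpha> (Hp p) (\<lambda>h. f_val N K M r q h (xp p)))"
    using a(12) xs(1) unfolding A_def v_def by (intro mult_left_mono sum_mono) auto
  finally have part2: "F xs \<le> \<dots>" .
  show ?thesis using part1 part2 xs(2) unfolding F_def A_def by simp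
qed

end
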